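(* Let $\alpha>1$, $r=\frac12(1-\frac1\alpha)$, let $s\ge2$ be an integer, and define $\overline a=\frac{s-1}{2}$ if $s$ is odd and $\overline a=\frac s2$ if $s$ is even, $\overline b=s-\overline a$, and $n''_*=\lfloor-\log_r\overline a\rfloor+1$. Let $k$ be a positive even integer and $a_1,\dots,a_k$ positive integers with $a_{2i-1}+a_{2i}=s$ for $i=1,\dots,k/2$. If \[ k\ \ge\ \max\Bigg\{\left\lceil 2\,\frac{(1-r+r^{n''_*})^{\overline a-1}\,[\,\overline b(1-r+r^{n''_*})+\overline a\,]}{(1-r)^{\overline a-1}(1-r^{n''_*})^{\overline b-1}\,[\,\overline b(1-r)+\overline a(1-r^{n''_*})\,]}+2\right\rceil\cdot\Big(\frac{1-r}{r}\Big)^{\overline a},\ \ 2\Big(\frac{1-r}{r}\Big)^{\overline a+1},\ \ 2\Big(\frac1{1-r}\Big)^{s-1}+2\Bigg\}, \] then \[ \Big[0,\tfrac k2\Big]=\Big\{\sum_{i=1}^{k/2}x_{2i-1}^{a_{2i-1}}x_{2i}^{a_{2i}}:\ x_1,\dots,x_k\in C_\alpha\Big\}. \]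
   Context: For real $\alpha>1$ let $r=\frac12(1-\frac1\alpha)\in(0,\frac12)$. Define $f_0,f_1:[0,1]\to[0,1]$ by $f_0(x)=rx$, $f_1(x)=rx+1-r$; for $\omega=\sigma_1\cdots\sigma_n\in\{0,1\}^n$ let $f_\omega=f_{\sigma_1}\circ\cdots\circ f_{\sigma_n}$. Let $F_n=\{f_\omega([0,1]):\omega\in\{0,1\}^n\}$ (the level-$n$ basic intervals, each of length $r^n$), $C_n=\bigcup_{I\in F_n}I$, and $C_\alpha=\bigcap_{n\ge1}C_n$ (the middle-$\frac1\alpha$ Cantor set; $C_3$ is the ternary Cantor set). *)

theory Defs
  imports Complex_Main
begin

definition cratio :: "real \<Rightarrow> real" where
  "cratio \<alpha> = (1 - 1/\<alpha>) / 2"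

definition fdig :: "real \<Rightarrow> bool \<Rightarrow> real \<Rightarrow> real" where
  "fdig \<alpha> \<sigma> x = (if \<sigma> then cratio \<alpha> * x + 1 - cratio \<alpha> else cratio \<alpha> * x)"

definition fword :: "real \<Rightarrow> bool list \<Rightarrow> real \<Rightarrow> real" where
  "fword \<alpha> \<omega> = foldr (\<lambda>\<sigma> g. fdig \<alpha> \<sigma> \<circ> g) \<omega> id"

definition basic_intervals :: "real \<Rightarrow> nat \<Rightarrow> real set set" where
  "basic_intervals \<alpha> n = {fword \<alpha> \<omega> ` {0..1} | \<omega>. length \<omega> = n}"

definition Clevel :: "real \<Rightarrow> nat \<Rightarrow> real set" where
  "Clevel \<alpha> n = \<Union> (basic_intervals \<alpha> n)"

definition cantor :: "real \<Rightarrow> real set" where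
  "cantor \<alpha> = (\<Inter>n\<in>{1..}. Clevel \<alpha> n)"

definition abar :: "nat \<Rightarrow> nat" where
  "abar s = (if odd s then (s - 1) div 2 else s div 2)"

definition bbar :: "nat \<Rightarrow> nat" where
  "bbar s = s - abar s"

text \<open>n''_* = floor(-log_r abar) + 1 (it is >= 1 since abar >= 1 and 0 < r < 1)\<close>
definition nstar :: "real \<Rightarrow> nat \<Rightarrow> int" where
  "nstar \<alpha> s = \<lfloor>- log (cratio \<alpha>) (real (abar s))\<rfloor> + 1"

end

theory Submission
  imports Defs "HOL-Analysis.Analysis"
begin

lemma fword_Nil[simp]: "fword \<alpha> [] = id"
  by (simp add: fword_def)
lemma fword_Cons[simp]: "fword \<alpha> (b#w) = fdig \<alpha> b \<circ> fword \<alpha> w"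
  by (simp add: fword_def)
lemma fword_append: "fword \<alpha> (w@v) = fword \<alpha> w \<circ> fword \<alpha> v"
  by (induction w) auto

lemma fword_affine: "fword \<alpha> w x = fword \<alpha> w 0 + cratio \<alpha> ^ length w * x"
  by (induction w) (auto simp: fdig_def algebra_simps)

definition bint :: "real \<Rightarrow> bool list \<Rightarrow> real set" where
  "bint \<alpha> w = {fword \<alpha> w 0 .. fword \<alpha> w 0 + cratio \<alpha> ^ length w}"

context
  fixes \<alpha> :: real
  assumes a1: "\<alpha> > 1"
begin

lemma r_pos: "0 < cratio \<alpha>"
  using a1 unfolding cratio_def by (simp add: field_simps)
lemma r_half: "cratio \<alpha> < 1/2"
  using a1 unfolding cratio_def by (simp add: field_simps)

lemma img_bint: "fword \<alpha> w ` {0..1} = bint \<alpha> w"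
proof -
  define p where "p = fword \<alpha> w 0"
  have h: "fword \<alpha> w = (\<lambda>x. cratio \<alpha> ^ length w * x + p)"
    unfolding p_def by (rule ext, subst fword_affine, simp)
  show ?thesis unfolding h bint_def image_affinity_atLeastAtMost p_def[symmetric]
    using r_pos by (simp add: add.commute)
qed

lemma fdig_01: "x \<in> {0..1} \<Longrightarrow> fdig \<alpha> b x \<in> {0..1}"
proof -
  assume x: "x \<in> {0..1}"
  have "cratio \<alpha> * x \<le> cratio \<alpha>" using x r_pos mult_left_le[of x "cratio \<alpha>"] by simp
  moreover have "0 \<le> cratio \<alpha> * x" using x r_pos by simp
  ultimately show ?thesis using r_half unfolding fdig_def by auto
qed

lemma fword_01: "x \<in> {0..1} \<Longrightarrow> fword \<alpha> w x \<in> {0..1}"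
  by (induction w arbitrary: x) (auto intro: fdig_01 simp del: atLeastAtMost_iff)

lemma bint_01: "bint \<alpha> w \<subseteq> {0..1}"
  using fword_01 img_bint[symmetric] by auto

lemma Clevel_eq: "Clevel \<alpha> n = \<Union>{bint \<alpha> w | w. length w = n}"
  unfolding Clevel_def basic_intervals_def by (simp add: img_bint)

lemma mem_cantor: "x \<in> cantor \<alpha> \<longleftrightarrow> (\<forall>n\<ge>1. \<exists>w. length w = n \<and> x \<in> bint \<alpha> w)"
  unfolding cantor_def Clevel_eq by blast

lemma cantor_01: "x \<in> cantor \<alpha> \<Longrightarrow> 0 \<le> x \<and> x \<le> 1"
proof -
  assume "x \<in> cantor \<alpha>"
  then obtain w where "x \<in> bint \<alpha> w" using mem_cantor by blast
  hence "x \<in> {0..1}" using bint_01[of w] by blast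
  thus ?thesis by simp
qed

lemma fword_cantor: "y \<in> cantor \<alpha> \<Longrightarrow> fword \<alpha> w y \<in> cantor \<alpha>"
proof -
  assume y: "y \<in> cantor \<alpha>"
  have y01: "y \<in> {0..1}" using cantor_01[OF y] by auto
  show ?thesis unfolding mem_cantor
  proof (intro allI impI)
    fix n :: nat assume n: "n \<ge> 1"
    show "\<exists>v. length v = n \<and> fword \<alpha> w y \<in> bint \<alpha> v"
    proof (cases "n \<le> length w")
      case True
      define w1 where "w1 = take n w"
      define w2 where "w2 = drop n w"
      have "w = w1 @ w2" unfolding w1_def w2_def by simp
      hence "fword \<alpha> w y = fword \<alpha> w1 (fword \<alpha> w2 y)" by (simp add: fword_append)
      moreover have "fword \<alpha> w2 y \<in> {0..1}" using fword_01 y01 by blast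
      ultimately have "fword \<alpha> w y \<in> bint \<alpha> w1" using img_bint[of w1] by blast
      moreover have "length w1 = n" using True unfolding w1_def by simp
      ultimately show ?thesis by blast
    next
      case False
      then obtain v2 where v2: "length v2 = n - length w" "y \<in> bint \<alpha> v2"
      proof -
        have "n - length w \<ge> 1" using False by simp
        thus ?thesis using y that unfolding mem_cantor by blast
      qed
      have "y \<in> fword \<alpha> v2 ` {0..1}" using v2 img_bint by simp
      then obtain z where z: "z \<in> {0..1}" "y = fword \<alpha> v2 z" by blast
      have "fword \<alpha> w y = fword \<alpha> (w @ v2) z" using z by (simp add: fword_append)
      hence "fword \<alpha> w y \<in> bint \<alpha> (w@v2)" using img_bint[of "w@v2"] z by blast
      moreover have "length (w@v2) = n" using v2 False by simp
      ultimately show ?thesis by blast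
    qed
  qed
qed

lemma fword_rep_False: "fword \<alpha> (replicate n False) 0 = 0"
  by (induction n) (auto simp: fdig_def)
lemma fword_rep_True: "fword \<alpha> (replicate n True) 1 = 1"
  by (induction n) (auto simp: fdig_def)

lemma zero_cantor: "0 \<in> cantor \<alpha>"
  unfolding mem_cantor
proof (intro allI impI)
  fix n :: nat
  have "0 \<in> bint \<alpha> (replicate n False)"
    using img_bint[of "replicate n False"] fword_rep_False[of n]
    by (metis atLeastAtMost_iff image_eqI order_refl zero_le_one)
  thus "\<exists>w. length w = n \<and> 0 \<in> bint \<alpha> w" by (intro exI[of _ "replicate n False"]) simp
qed

lemma one_cantor: "1 \<in> cantor \<alpha>"
  unfolding mem_cantor
proof (intro allI impI)
  fix n :: nat
  have "1 \<in> bint \<alpha> (replicate n True)"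
    using img_bint[of "replicate n True"] fword_rep_True[of n]
    by (metis atLeastAtMost_iff image_eqI order_refl zero_le_one)
  thus "\<exists>w. length w = n \<and> 1 \<in> bint \<alpha> w" by (intro exI[of _ "replicate n True"]) simp
qed

lemma fword_0_cantor: "fword \<alpha> w 0 \<in> cantor \<alpha>"
  using fword_cantor zero_cantor by blast
lemma fword_1_cantor: "fword \<alpha> w 1 \<in> cantor \<alpha>"
  using fword_cantor one_cantor by blast
lemma fword_r_cantor: "fword \<alpha> w (cratio \<alpha>) \<in> cantor \<alpha>"
proof -
  have "fword \<alpha> w (cratio \<alpha>) = fword \<alpha> (w@[False]) 1" by (simp add: fword_append fdig_def)
  thus ?thesis using fword_1_cantor by simp
qed
lemma fword_1r_cantor: "fword \<alpha> w (1 - cratio \<alpha>) \<in> cantor \<alpha>"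
proof -
  have "fword \<alpha> w (1 - cratio \<alpha>) = fword \<alpha> (w@[True]) 0" by (simp add: fword_append fdig_def)
  thus ?thesis using fword_0_cantor by simp
qed

lemma fdig_inj: "inj (fdig \<alpha> b)"
  using r_pos unfolding fdig_def inj_def by auto

lemma img_disjoint:
  "length w = length v \<Longrightarrow> w \<noteq> v \<Longrightarrow> fword \<alpha> w ` {0..1} \<inter> fword \<alpha> v ` {0..1} = {}"
proof (induction w arbitrary: v)
  case Nil thus ?case by simp
next
  case (Cons b w)
  then obtain c v' where v: "v = c # v'" by (cases v) auto
  show ?case
  proof (cases "b = c")
    case True
    hence ne: "w \<noteq> v'" using Cons v by simp
    have "fword \<alpha> (b#w) ` {0..1} \<inter> fword \<alpha> v ` {0..1}
          = fdig \<alpha> b ` (fword \<alpha> w ` {0..1} \<inter> fword \<alpha> v' ` {0..1})"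
      using True v by (simp add: image_comp[symmetric] image_Int[OF fdig_inj] comp_def image_image)
    also have "\<dots> = {}" using Cons.IH[OF _ ne] Cons.prems v by simp
    finally show ?thesis .
  next
    case False
    have s1: "fword \<alpha> (b#w) ` {0..1} \<subseteq> fdig \<alpha> b ` {0..1}"
      using fword_01 by (auto simp del: atLeastAtMost_iff)
    have s2: "fword \<alpha> v ` {0..1} \<subseteq> fdig \<alpha> c ` {0..1}"
      using fword_01 v by (auto simp del: atLeastAtMost_iff)
    have "fdig \<alpha> b ` {0..1} \<inter> fdig \<alpha> c ` {0..1} = {}"
    proof -
      have "\<And>x. x \<in> {0..1} \<Longrightarrow> fdig \<alpha> True x \<ge> 1 - cratio \<alpha>"
        using r_pos unfolding fdig_def by simp
      moreover have "\<And>x. x \<in> {0..1} \<Longrightarrow> fdig \<alpha> False x \<le> cratio \<alpha>"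
        using r_pos unfolding fdig_def by (simp add: mult_left_le)
      ultimately show ?thesis using False r_half by (cases b; cases c) force+
    qed
    thus ?thesis using s1 s2 by blast
  qed
qed

lemma bint_disjoint: "length w = length v \<Longrightarrow> w \<noteq> v \<Longrightarrow> bint \<alpha> w \<inter> bint \<alpha> v = {}"
  using img_disjoint img_bint by metis

lemma fword_snoc0: "fword \<alpha> (w@[b]) 0 = fword \<alpha> w 0 + cratio \<alpha> ^ length w * (if b then 1 - cratio \<alpha> else 0)"
  using fword_affine[of \<alpha> w "fdig \<alpha> b 0"] by (simp add: fword_append fdig_def)

lemma bint_snoc_sub: "bint \<alpha> (w@[b]) \<subseteq> bint \<alpha> w"
proof -
  have "fword \<alpha> (w@[b]) ` {0..1} = fword \<alpha> w ` (fdig \<alpha> b ` {0..1})"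
    by (simp add: fword_append image_comp)
  also have "\<dots> \<subseteq> fword \<alpha> w ` {0..1}" using fdig_01 by (auto simp del: atLeastAtMost_iff)
  finally show ?thesis using img_bint by metis
qed

lemma cantor_child:
  assumes "x \<in> cantor \<alpha>" "x \<in> bint \<alpha> w"
  shows "x \<in> bint \<alpha> (w@[False]) \<or> x \<in> bint \<alpha> (w@[True])"
proof -
  obtain v where v: "length v = length w + 1" "x \<in> bint \<alpha> v"
    using assms(1) unfolding mem_cantor by (meson le_add2)
  then obtain v0 b where vb: "v = v0 @ [b]" by (metis add_is_0 length_0_conv rev_exhaust zero_neq_one)
  have "x \<in> bint \<alpha> v0" using v vb bint_snoc_sub by blast
  hence "v0 = w" using bint_disjoint[of v0 w] v vb assms(2) by force
  thus ?thesis using v vb by (cases b) auto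
qed


lemma bint_False: "bint \<alpha> (w@[False]) = {fword \<alpha> w 0 .. fword \<alpha> w 0 + cratio \<alpha> ^ length w * cratio \<alpha>}"
  unfolding bint_def using fword_snoc0[of w False] by simp
lemma bint_True: "bint \<alpha> (w@[True]) = {fword \<alpha> w 0 + cratio \<alpha> ^ length w * (1 - cratio \<alpha>) .. fword \<alpha> w 0 + cratio \<alpha> ^ length w}"
  unfolding bint_def using fword_snoc0[of w True] by (simp add: algebra_simps)

lemma bint_len: "a \<in> bint \<alpha> w \<Longrightarrow> b \<in> bint \<alpha> w \<Longrightarrow> b - a \<le> cratio \<alpha> ^ length w"
  unfolding bint_def by auto

lemma cantor_gap:
  assumes ab: "a < b" and aC: "a \<in> cantor \<alpha>" and bC: "b \<in> cantor \<alpha>"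
    and gap: "\<forall>z\<in>cantor \<alpha>. z \<le> a \<or> b \<le> z"
    and aw: "a \<in> bint \<alpha> w" and bw: "b \<in> bint \<alpha> w"
  shows "\<exists>v. a = fword \<alpha> (w@v) (cratio \<alpha>) \<and> b = fword \<alpha> (w@v) (1 - cratio \<alpha>)"
proof -
  let ?r = "cratio \<alpha>"
  obtain N where N: "?r ^ N < b - a" using real_arch_pow_inv[of "b - a" ?r] ab r_half by auto
  have main: "\<forall>w. length w + j = N \<longrightarrow> a \<in> bint \<alpha> w \<longrightarrow> b \<in> bint \<alpha> w \<longrightarrow>
      (\<exists>v. a = fword \<alpha> (w@v) ?r \<and> b = fword \<alpha> (w@v) (1 - ?r))" for j
  proof (induction j)
    case 0
    then show ?case using bint_len N by fastforce
  next
    case (Suc j)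
    show ?case
    proof (intro allI impI)
      fix w assume lw: "length w + Suc j = N" and aw: "a \<in> bint \<alpha> w" and bw: "b \<in> bint \<alpha> w"
      define p where "p = fword \<alpha> w 0"
      define h where "h = ?r ^ length w"
      have hpos: "h > 0" unfolding h_def using r_pos by simp
      have rh: "?r * h < (1 - ?r) * h" using hpos r_half by simp
      have ach: "a \<in> bint \<alpha> (w@[False]) \<or> a \<in> bint \<alpha> (w@[True])" using cantor_child[OF aC aw] .
      have bch: "b \<in> bint \<alpha> (w@[False]) \<or> b \<in> bint \<alpha> (w@[True])" using cantor_child[OF bC bw] .
      have IH: "\<And>c. a \<in> bint \<alpha> (w@[c]) \<Longrightarrow> b \<in> bint \<alpha> (w@[c]) \<Longrightarrow> \<exists>v. a = fword \<alpha> (w@v) ?r \<and> b = fword \<alpha> (w@v) (1 - ?r)"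
      proof -
        fix c assume "a \<in> bint \<alpha> (w@[c])" "b \<in> bint \<alpha> (w@[c])"
        then obtain v where "a = fword \<alpha> ((w@[c])@v) ?r \<and> b = fword \<alpha> ((w@[c])@v) (1 - ?r)"
        proof -
          have "length (w@[c]) + j = N" using lw by simp
          thus ?thesis using Suc.IH \<open>a \<in> bint \<alpha> (w@[c])\<close> \<open>b \<in> bint \<alpha> (w@[c])\<close> that by blast
        qed
        thus "\<exists>v. a = fword \<alpha> (w@v) ?r \<and> b = fword \<alpha> (w@v) (1 - ?r)"
          by (intro exI[of _ "c#v"]) simp
      qed
      show "\<exists>v. a = fword \<alpha> (w@v) ?r \<and> b = fword \<alpha> (w@v) (1 - ?r)"
      proof (cases "a \<in> bint \<alpha> (w@[False]) \<and> b \<in> bint \<alpha> (w@[True])")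
        case True
        define u where "u = fword \<alpha> w ?r"
        define v where "v = fword \<alpha> w (1 - ?r)"
        have u: "u = p + h * ?r" unfolding u_def p_def h_def by (rule fword_affine)
        have v: "v = p + h * (1 - ?r)" unfolding v_def p_def h_def by (rule fword_affine)
        have uC: "u \<in> cantor \<alpha>" unfolding u_def by (rule fword_r_cantor)
        have vC: "v \<in> cantor \<alpha>" unfolding v_def by (rule fword_1r_cantor)
        have au: "a \<le> u" using True u unfolding bint_False p_def h_def by (auto simp: mult.commute)
        have vb: "v \<le> b" using True v unfolding bint_True p_def h_def by (auto simp: mult.commute)
        have uv: "u < v" using u v rh by (simp add: mult.commute)
        have "a = u" using gap uC au uv vb by force
        moreover have "b = v" using gap vC au uv vb by force
        ultimately show ?thesis unfolding u_def v_def by (intro exI[of _ "[]"]) simp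
      next
        case False
        have "\<not> (a \<in> bint \<alpha> (w@[True]) \<and> b \<in> bint \<alpha> (w@[False]))"
        proof
          assume "a \<in> bint \<alpha> (w@[True]) \<and> b \<in> bint \<alpha> (w@[False])"
          hence "p + h * (1 - ?r) \<le> a" "b \<le> p + h * ?r"
            unfolding bint_True bint_False p_def h_def by (auto simp: mult.commute)
          thus False using ab rh by (simp add: mult.commute)
        qed
        then show ?thesis using False ach bch IH by blast
      qed
    qed
  qed
  have "b - a \<le> ?r ^ length w" using bint_len aw bw .
  hence "?r ^ N < ?r ^ length w" using N by linarith
  hence "length w < N" using power_strict_decreasing_iff[of ?r] r_pos r_half by simp
  then show ?thesis using main[of "N - length w"] aw bw by simp
qed

lemma closed_cantor: "closed (cantor \<alpha>)"
proof -
  have "closed (Clevel \<alpha> n)" for n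
  proof -
    have fin: "finite {w :: bool list. length w = n}"
      using finite_lists_length_eq[of "UNIV :: bool set" n] by simp
    have "{bint \<alpha> w | w. length w = n} = bint \<alpha> ` {w. length w = n}" by blast
    hence "finite {bint \<alpha> w | w. length w = n}" using fin by simp
    moreover have "\<forall>S\<in>{bint \<alpha> w | w. length w = n}. closed S" unfolding bint_def by auto
    ultimately show ?thesis unfolding Clevel_eq by (rule closed_Union)
  qed
  thus ?thesis unfolding cantor_def by (simp add: closed_INT)
qed

lemma compact_cantor: "compact (cantor \<alpha>)"
proof -
  have "cantor \<alpha> \<subseteq> {0..1}" using cantor_01 by auto
  hence "bounded (cantor \<alpha>)" by (meson bounded_closed_interval bounded_subset)
  thus ?thesis using closed_cantor compact_eq_bounded_closed by blast
qed

lemma r_cantor: "x \<in> cantor \<alpha> \<Longrightarrow> cratio \<alpha> * x \<in> cantor \<alpha>"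
  using fword_cantor[of x "[False]"] by (simp add: fdig_def)

end


definition gapK :: "real set \<Rightarrow> real \<Rightarrow> real \<Rightarrow> bool" where
  "gapK K x y \<longleftrightarrow> x \<in> K \<and> y \<in> K \<and> x < y \<and> (\<forall>z\<in>K. z \<le> x \<or> y \<le> z)"

definition thick :: "real set \<Rightarrow> real \<Rightarrow> bool" where
  "thick K \<tau> \<longleftrightarrow>
    (\<forall>x y. gapK K x y \<longrightarrow> \<tau> * (y - x) \<le> x \<and> \<tau> * (y - x) \<le> 1 - y) \<and>
    (\<forall>x y x' y'. gapK K x y \<longrightarrow> gapK K x' y' \<longrightarrow> y' \<le> x \<longrightarrow> y - x \<le> y' - x' \<longrightarrow> \<tau> * (y - x) \<le> x - y') \<and>
    (\<forall>x y x' y'. gapK K x y \<longrightarrow> gapK K x' y' \<longrightarrow> y \<le> x' \<longrightarrow> y - x \<le> y' - x' \<longrightarrow> \<tau> * (y - x) \<le> x' - y)"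

definition bridge :: "real set \<Rightarrow> real \<Rightarrow> real \<Rightarrow> real \<Rightarrow> bool" where
  "bridge K \<delta> a b \<longleftrightarrow> a \<in> K \<and> b \<in> K \<and> a \<le> b \<and>
     (a = 0 \<or> (\<exists>x. gapK K x a \<and> \<delta> \<le> a - x)) \<and>
     (b = 1 \<or> (\<exists>y. gapK K b y \<and> \<delta> \<le> y - b)) \<and>
     (\<forall>x y. gapK K x y \<longrightarrow> a \<le> x \<longrightarrow> y \<le> b \<longrightarrow> y - x < \<delta>)"

lemma bridge_len:
  assumes br: "bridge K \<delta> a b" and th: "thick K \<tau>" and t0: "0 < \<tau>" "\<tau> \<le> 1" and d0: "0 < \<delta>" "\<delta> \<le> 1"
  shows "\<tau> * \<delta> \<le> b - a"
proof -
  have ab: "a \<le> b" using br unfolding bridge_def by simp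
  consider (A) "a = 0" "b = 1" | (B) "a = 0" "\<exists>y. gapK K b y \<and> \<delta> \<le> y - b"
    | (C) "\<exists>x. gapK K x a \<and> \<delta> \<le> a - x" "b = 1"
    | (D) "\<exists>x. gapK K x a \<and> \<delta> \<le> a - x" "\<exists>y. gapK K b y \<and> \<delta> \<le> y - b"
    using br unfolding bridge_def by blast
  then show ?thesis
  proof cases
    case A
    have "\<tau> * \<delta> \<le> 1 * 1" using t0 d0 by (intro mult_mono) auto
    thus ?thesis using A by simp
  next
    case B
    then obtain y where y: "gapK K b y" "\<delta> \<le> y - b" by blast
    have "\<tau> * (y - b) \<le> b" using th y unfolding thick_def by blast
    moreover have "\<tau> * \<delta> \<le> \<tau> * (y - b)" using y t0 by (intro mult_left_mono) auto
    ultimately show ?thesis using B by simp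
  next
    case C
    then obtain x where x: "gapK K x a" "\<delta> \<le> a - x" by blast
    have "\<tau> * (a - x) \<le> 1 - a" using th x unfolding thick_def by blast
    moreover have "\<tau> * \<delta> \<le> \<tau> * (a - x)" using x t0 by (intro mult_left_mono) auto
    ultimately show ?thesis using C by simp
  next
    case D
    then obtain x y where x: "gapK K x a" "\<delta> \<le> a - x" and y: "gapK K b y" "\<delta> \<le> y - b" by blast
    show ?thesis
    proof (cases "y - b \<le> a - x")
      case True
      have "\<tau> * (y - b) \<le> b - a" using th x y ab True unfolding thick_def by blast
      moreover have "\<tau> * \<delta> \<le> \<tau> * (y - b)" using y t0 by (intro mult_left_mono) auto
      ultimately show ?thesis by simp
    next
      case False
      have "\<tau> * (a - x) \<le> b - a" using th x y ab False unfolding thick_def by force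
      moreover have "\<tau> * \<delta> \<le> \<tau> * (a - x)" using x t0 by (intro mult_left_mono) auto
      ultimately show ?thesis by simp
    qed
  qed
qed

lemma bridge_window:
  assumes br: "bridge K \<delta> a b" and cl: "closed K" and w: "w1 \<le> w2" "\<delta> \<le> w2 - w1" "w1 \<le> b" "a \<le> w2"
  shows "\<exists>z\<in>K. a \<le> z \<and> z \<le> b \<and> w1 \<le> z \<and> z \<le> w2"
proof (rule ccontr)
  assume no: "\<not> ?thesis"
  have aK: "a \<in> K" and bK: "b \<in> K" and ab: "a \<le> b" using br unfolding bridge_def by auto
  have aw1: "a < w1" using no aK ab w by force
  have bw2: "w2 < b" using no bK ab w by force
  have c1: "compact (K \<inter> {a..w1})" using cl by (simp add: closed_Int_compact)
  have c2: "compact (K \<inter> {w2..b})" using cl by (simp add: closed_Int_compact)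
  obtain z1 where z1: "z1 \<in> K \<inter> {a..w1}" "\<forall>y\<in>K \<inter> {a..w1}. y \<le> z1"
    using compact_attains_sup[OF c1] aK aw1 by force
  obtain z2 where z2: "z2 \<in> K \<inter> {w2..b}" "\<forall>y\<in>K \<inter> {w2..b}. z2 \<le> y"
    using compact_attains_inf[OF c2] bK bw2 by force
  have g: "gapK K z1 z2"
    unfolding gapK_def
  proof (intro conjI ballI)
    show "z1 \<in> K" "z2 \<in> K" using z1 z2 by auto
    show "z1 < z2"
    proof (rule ccontr)
      assume "\<not> z1 < z2"
      hence "z1 = w1" "z1 \<le> w2" using z1 z2 w by auto
      thus False using no z1 z2 by force
    qed
    fix z assume zK: "z \<in> K"
    show "z \<le> z1 \<or> z2 \<le> z"
    proof (rule ccontr)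
      assume "\<not> (z \<le> z1 \<or> z2 \<le> z)"
      hence zz: "z1 < z" "z < z2" by auto
      have "a \<le> z" "z \<le> b" using zz z1 z2 by auto
      moreover have "\<not> z \<le> w1" using z1 zK zz \<open>a \<le> z\<close> by force
      moreover have "\<not> w2 \<le> z" using z2 zK zz \<open>z \<le> b\<close> by force
      ultimately show False using no zK by force
    qed
  qed
  have "z2 - z1 < \<delta>" using br g z1 z2 unfolding bridge_def by auto
  moreover have "z2 - z1 \<ge> w2 - w1" using z1 z2 by auto
  ultimately show False using w by linarith
qed

lemma sep_max:
  fixes E :: "real set"
  assumes "E \<noteq> {}" "bdd_above E" "0 < d" "\<forall>x\<in>E. \<forall>y\<in>E. x < y \<longrightarrow> x + d \<le> y"
  shows "\<exists>e\<in>E. \<forall>y\<in>E. y \<le> e"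
proof -
  obtain e where e: "e \<in> E" "Sup E - d < e"
    using less_cSup_iff[OF assms(1,2), of "Sup E - d"] assms(3) by auto
  have "\<forall>y\<in>E. y \<le> e"
  proof
    fix y assume y: "y \<in> E"
    show "y \<le> e"
    proof (rule ccontr)
      assume "\<not> y \<le> e"
      hence "e + d \<le> y" using assms(4) e y by auto
      moreover have "y \<le> Sup E" using cSup_upper[OF y assms(2)] .
      ultimately show False using e by linarith
    qed
  qed
  thus ?thesis using e by blast
qed

lemma sep_min:
  fixes E :: "real set"
  assumes "E \<noteq> {}" "bdd_below E" "0 < d" "\<forall>x\<in>E. \<forall>y\<in>E. x < y \<longrightarrow> x + d \<le> y"
  shows "\<exists>e\<in>E. \<forall>y\<in>E. e \<le> y"
proof -
  obtain e where e: "e \<in> E" "e < Inf E + d"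
    using cInf_less_iff[OF assms(1,2), of "Inf E + d"] assms(3) by auto
  have "\<forall>y\<in>E. e \<le> y"
  proof
    fix y assume y: "y \<in> E"
    show "e \<le> y"
    proof (rule ccontr)
      assume "\<not> e \<le> y"
      hence "y + d \<le> e" using assms(4) e y by auto
      moreover have "Inf E \<le> y" using cInf_lower[OF y assms(2)] .
      ultimately show False using e by linarith
    qed
  qed
  thus ?thesis using e by blast
qed

lemma bridge_sub:
  assumes br: "bridge K \<delta> a b" and zK: "z \<in> K" and az: "a \<le> z" "z \<le> b" and d: "0 < \<delta>'" "\<delta>' \<le> \<delta>"
  shows "\<exists>a' b'. bridge K \<delta>' a' b' \<and> a \<le> a' \<and> a' \<le> z \<and> z \<le> b' \<and> b' \<le> b"
proof -
  have aK: "a \<in> K" and bK: "b \<in> K" using br unfolding bridge_def by auto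
  define E where "E = insert a {y. \<exists>x. gapK K x y \<and> \<delta>' \<le> y - x \<and> a \<le> y \<and> y \<le> z}"
  define F where "F = insert b {x. \<exists>y. gapK K x y \<and> \<delta>' \<le> y - x \<and> z \<le> x \<and> x \<le> b}"
  have EK: "E \<subseteq> K" unfolding E_def gapK_def using aK by auto
  have FK: "F \<subseteq> K" unfolding F_def gapK_def using bK by auto
  have Ea: "\<forall>y\<in>E. a \<le> y \<and> y \<le> z" unfolding E_def using az by auto
  have Fb: "\<forall>y\<in>F. z \<le> y \<and> y \<le> b" unfolding F_def using az by auto
  have Esep: "\<forall>x\<in>E. \<forall>y\<in>E. x < y \<longrightarrow> x + \<delta>' \<le> y"
  proof (intro ballI impI)
    fix x y assume x: "x \<in> E" and y: "y \<in> E" and xy: "x < y"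
    have "y \<noteq> a" using Ea x xy by force
    then obtain x0 where x0: "gapK K x0 y" "\<delta>' \<le> y - x0" using y unfolding E_def by auto
    have "x \<in> K" using EK x by auto
    hence "x \<le> x0" using x0 xy unfolding gapK_def by force
    thus "x + \<delta>' \<le> y" using x0 by linarith
  qed
  have Fsep: "\<forall>x\<in>F. \<forall>y\<in>F. x < y \<longrightarrow> x + \<delta>' \<le> y"
  proof (intro ballI impI)
    fix x y assume x: "x \<in> F" and y: "y \<in> F" and xy: "x < y"
    have "x \<noteq> b" using Fb y xy by force
    then obtain y0 where y0: "gapK K x y0" "\<delta>' \<le> y0 - x" using x unfolding F_def by auto
    have "y \<in> K" using FK y by auto
    hence "y0 \<le> y" using y0 xy unfolding gapK_def by force
    thus "x + \<delta>' \<le> y" using y0 by linarith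
  qed
  obtain a' where a': "a' \<in> E" "\<forall>y\<in>E. y \<le> a'"
    using sep_max[of E \<delta>'] Esep d Ea unfolding bdd_above_def E_def by blast
  obtain b' where b': "b' \<in> F" "\<forall>y\<in>F. b' \<le> y"
    using sep_min[of F \<delta>'] Fsep d Fb unfolding bdd_below_def F_def by blast
  have "bridge K \<delta>' a' b'"
    unfolding bridge_def
  proof (intro conjI allI impI)
    show "a' \<in> K" "b' \<in> K" using a' b' EK FK by auto
    show "a' \<le> b'" using a' b' Ea Fb by force
    show "a' = 0 \<or> (\<exists>x. gapK K x a' \<and> \<delta>' \<le> a' - x)"
    proof (cases "a' = a")
      case True
      thus ?thesis using br d unfolding bridge_def by force
    next
      case False
      thus ?thesis using a' unfolding E_def by auto
    qed
    show "b' = 1 \<or> (\<exists>y. gapK K b' y \<and> \<delta>' \<le> y - b')"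
    proof (cases "b' = b")
      case True
      thus ?thesis using br d unfolding bridge_def by force
    next
      case False
      thus ?thesis using b' unfolding F_def by auto
    qed
    fix x y assume g: "gapK K x y" and xa: "a' \<le> x" and yb: "y \<le> b'"
    show "y - x < \<delta>'"
    proof (rule ccontr)
      assume big: "\<not> y - x < \<delta>'"
      have "z \<le> x \<or> y \<le> z" using g zK unfolding gapK_def by blast
      thus False
      proof
        assume "y \<le> z"
        moreover have "a \<le> y" using xa a' Ea g unfolding gapK_def by force
        ultimately have "y \<in> E" unfolding E_def using g big by auto
        thus False using a' xa g unfolding gapK_def by force
      next
        assume "z \<le> x"
        moreover have "x \<le> b" using yb b' Fb g unfolding gapK_def by force
        ultimately have "x \<in> F" unfolding F_def using g big by auto
        thus False using b' yb g unfolding gapK_def by force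
      qed
    qed
  qed
  moreover have "a \<le> a'" using a' unfolding E_def by auto
  moreover have "b' \<le> b" using b' unfolding F_def by auto
  ultimately show ?thesis using a' b' Ea Fb by blast
qed


lemma sums_compact:
  fixes K :: "'a \<Rightarrow> real set"
  assumes "finite I" "\<forall>i\<in>I. compact (K i)"
  shows "compact {sum z I | z. \<forall>i\<in>I. z i \<in> K i}"
  using assms
proof (induction I rule: finite_induct)
  case empty
  have "{sum z {} | z. \<forall>i\<in>{}. z i \<in> K i} = {0::real}" by auto
  then show ?case by simp
next
  case (insert j F)
  have eq: "{sum z (insert j F) | z. \<forall>i\<in>insert j F. z i \<in> K i}
      = {x + y | x y. x \<in> K j \<and> y \<in> {sum z F | z. \<forall>i\<in>F. z i \<in> K i}}"
  proof (intro set_eqI iffI)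
    fix s assume "s \<in> {sum z (insert j F) | z. \<forall>i\<in>insert j F. z i \<in> K i}"
    then obtain z where z: "s = sum z (insert j F)" "\<forall>i\<in>insert j F. z i \<in> K i" by blast
    have "s = z j + sum z F" using z insert by simp
    thus "s \<in> {x + y | x y. x \<in> K j \<and> y \<in> {sum z F | z. \<forall>i\<in>F. z i \<in> K i}}" using z by blast
  next
    fix s assume "s \<in> {x + y | x y. x \<in> K j \<and> y \<in> {sum z F | z. \<forall>i\<in>F. z i \<in> K i}}"
    then obtain x z where xz: "s = x + sum z F" "x \<in> K j" "\<forall>i\<in>F. z i \<in> K i" by blast
    define z' where "z' = z(j := x)"
    have "sum z' F = sum z F" unfolding z'_def using insert by (intro sum.cong) auto
    hence "s = sum z' (insert j F)" using xz insert by (simp add: z'_def)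
    moreover have "\<forall>i\<in>insert j F. z' i \<in> K i" using xz unfolding z'_def by auto
    ultimately show "s \<in> {sum z (insert j F) | z. \<forall>i\<in>insert j F. z i \<in> K i}" by blast
  qed
  show ?case unfolding eq using insert by (intro compact_sums) auto
qed

lemma refine_all:
  assumes fin: "finite I" and m: "card I = m"
    and Kp: "\<forall>i\<in>I. closed (K i) \<and> thick (K i) \<tau>"
    and t0: "0 < \<tau>" "\<tau> \<le> 1" and dd: "0 < \<delta>'" "\<delta>' \<le> \<delta>" "\<delta> \<le> 1"
    and cond: "\<delta> \<le> (real m - 1) * \<tau> * \<delta>'"
    and st: "\<forall>i\<in>I. bridge (K i) \<delta> (a i) (b i)" "sum a I \<le> t" "t \<le> sum b I"
  shows "\<exists>a b. (\<forall>i\<in>I. bridge (K i) \<delta>' (a i) (b i)) \<and> sum a I \<le> t \<and> t \<le> sum b I"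
proof -
  have gen: "\<exists>a b. (\<forall>i\<in>I. bridge (K i) (if i \<in> J then \<delta>' else \<delta>) (a i) (b i)) \<and> sum a I \<le> t \<and> t \<le> sum b I"
    if "J \<subseteq> I" for J
    using finite_subset[OF that fin] that
  proof (induction J rule: finite_subset_induct)
    case empty
    then show ?case using st by auto
  next
    case (insert l J)
    then obtain a b where ab: "\<forall>i\<in>I. bridge (K i) (if i \<in> J then \<delta>' else \<delta>) (a i) (b i)"
      "sum a I \<le> t" "t \<le> sum b I" by blast
    have lI: "l \<in> I" and lJ: "l \<notin> J" using insert by auto
    have len: "\<tau> * \<delta>' \<le> b i - a i" if i: "i \<in> I" for i
    proof -
      have "\<tau> * (if i \<in> J then \<delta>' else \<delta>) \<le> b i - a i"
        using bridge_len[of "K i" _ "a i" "b i" \<tau>] ab(1) i Kp t0 dd by auto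
      moreover have "\<tau> * \<delta>' \<le> \<tau> * (if i \<in> J then \<delta>' else \<delta>)" using t0 dd by auto
      ultimately show ?thesis by linarith
    qed
    define y1 where "y1 = sum a (I - {l})"
    define y2 where "y2 = sum b (I - {l})"
    have sa: "sum a I = a l + y1" unfolding y1_def using sum.remove[OF fin lI] .
    have sb: "sum b I = b l + y2" unfolding y2_def using sum.remove[OF fin lI] .
    have "y2 - y1 = (\<Sum>i\<in>I - {l}. b i - a i)" unfolding y1_def y2_def by (simp add: sum_subtractf)
    also have "\<dots> \<ge> (\<Sum>i\<in>I - {l}. \<tau> * \<delta>')" using len by (intro sum_mono) auto
    finally have "y2 - y1 \<ge> real (card (I - {l})) * (\<tau> * \<delta>')" by simp
    moreover have "real (card (I - {l})) = real m - 1"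
    proof -
      have "m \<ge> 1" using card_gt_0_iff[of I] lI fin m by auto
      thus ?thesis using card_Diff_singleton[OF lI] m by (simp add: of_nat_diff)
    qed
    ultimately have y12: "y2 - y1 \<ge> \<delta>" using cond by (simp add: mult.assoc)
    have brl: "bridge (K l) \<delta> (a l) (b l)" using ab(1) lI lJ by auto
    obtain z where z: "z \<in> K l" "a l \<le> z" "z \<le> b l" "t - y2 \<le> z" "z \<le> t - y1"
      using bridge_window[OF brl, of "t - y2" "t - y1"] Kp lI y12 dd ab(2,3) sa sb by auto
    obtain a'' b'' where ab'': "bridge (K l) \<delta>' a'' b''" "a l \<le> a''" "a'' \<le> z" "z \<le> b''" "b'' \<le> b l"
      using bridge_sub[OF brl z(1) z(2) z(3), of \<delta>'] dd by blast
    define a' where "a' = a(l := a'')"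
    define b' where "b' = b(l := b'')"
    have "sum a' (I - {l}) = y1" unfolding a'_def y1_def by (intro sum.cong) auto
    hence sa': "sum a' I = a'' + y1" using sum.remove[OF fin lI, of a'] unfolding a'_def by simp
    have "sum b' (I - {l}) = y2" unfolding b'_def y2_def by (intro sum.cong) auto
    hence sb': "sum b' I = b'' + y2" using sum.remove[OF fin lI, of b'] unfolding b'_def by simp
    have "\<forall>i\<in>I. bridge (K i) (if i \<in> insert l J then \<delta>' else \<delta>) (a' i) (b' i)"
    proof
      fix i assume i: "i \<in> I"
      show "bridge (K i) (if i \<in> insert l J then \<delta>' else \<delta>) (a' i) (b' i)"
      proof (cases "i = l")
        case True thus ?thesis using ab'' unfolding a'_def b'_def by simp
      next
        case False thus ?thesis using ab(1) i unfolding a'_def b'_def by simp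
      qed
    qed
    moreover have "sum a' I \<le> t" using sa' ab'' z by linarith
    moreover have "t \<le> sum b' I" using sb' ab'' z by linarith
    ultimately show ?case by blast
  qed
  show ?thesis using gen[of I] by auto
qed

lemma bridge_01:
  assumes "K \<subseteq> {0..1}" "0 \<in> K" "1 \<in> K" "thick K \<tau>" "0 < \<tau>"
  shows "bridge K 1 0 1"
  unfolding bridge_def
proof (intro conjI allI impI)
  fix x y assume g: "gapK K x y" "0 \<le> x" "y \<le> 1"
  have "\<tau> * (y - x) \<le> x" using assms(4) g unfolding thick_def by blast
  moreover have "0 < \<tau> * (y - x)" using g assms(5) unfolding gapK_def by simp
  ultimately show "y - x < 1" using g by linarith
qed (use assms in auto)

lemma cover:
  assumes fin: "finite I" and m: "card I = m"
    and Kp: "\<forall>i\<in>I. closed (K i) \<and> K i \<subseteq> {0..1} \<and> 0 \<in> K i \<and> 1 \<in> K i \<and> thick (K i) \<tau>"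
    and t0: "0 < \<tau>" "\<tau> \<le> 1" and cond: "(real m - 1) * \<tau> > 1"
    and t: "0 \<le> t" "t \<le> real m"
  shows "\<exists>z. (\<forall>i\<in>I. z i \<in> K i) \<and> sum z I = t"
proof -
  define \<xi> where "\<xi> = 1 / ((real m - 1) * \<tau>)"
  have \<xi>: "0 < \<xi>" "\<xi> < 1" unfolding \<xi>_def using cond by auto
  have xi_eq: "(real m - 1) * \<tau> * \<xi> = 1"
  proof -
    have "(real m - 1) * \<tau> \<noteq> 0" using cond by linarith
    thus ?thesis unfolding \<xi>_def by simp
  qed
  have claim: "\<exists>a b. (\<forall>i\<in>I. bridge (K i) (\<xi> ^ n) (a i) (b i)) \<and> sum a I \<le> t \<and> t \<le> sum b I" for n
  proof (induction n)
    case 0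
    have "\<forall>i\<in>I. bridge (K i) 1 ((\<lambda>_. 0) i) ((\<lambda>_. 1) i)" using bridge_01 Kp t0 by auto
    moreover have "sum (\<lambda>_. 0::real) I \<le> t" "t \<le> sum (\<lambda>_. 1::real) I" using t m by auto
    ultimately show ?case by (intro exI[of _ "\<lambda>_. 0"] exI[of _ "\<lambda>_. 1"]) simp
  next
    case (Suc n)
    then obtain a b where ab: "\<forall>i\<in>I. bridge (K i) (\<xi> ^ n) (a i) (b i)" "sum a I \<le> t" "t \<le> sum b I"
      by blast
    have d1: "0 < \<xi> ^ Suc n" using \<xi> by simp
    have d3: "\<xi> ^ n \<le> 1" using \<xi> by (simp add: power_le_one)
    have "\<xi> * \<xi> ^ n \<le> 1 * \<xi> ^ n" using \<xi> by (intro mult_right_mono) auto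
    hence d2: "\<xi> ^ Suc n \<le> \<xi> ^ n" by simp
    note d = d1 d2 d3
    have "(real m - 1) * \<tau> * \<xi> ^ Suc n = ((real m - 1) * \<tau> * \<xi>) * \<xi> ^ n"
      by (simp add: algebra_simps)
    also have "\<dots> = \<xi> ^ n" using xi_eq by simp
    finally have ceq: "(real m - 1) * \<tau> * \<xi> ^ Suc n = \<xi> ^ n" .
    hence c: "\<xi> ^ n \<le> (real m - 1) * \<tau> * \<xi> ^ Suc n" by linarith
    show ?case using refine_all[OF fin m _ t0 d c ab] Kp by blast
  qed
  define S where "S = {sum z I | z. \<forall>i\<in>I. z i \<in> K i}"
  have "\<forall>i\<in>I. compact (K i)"
  proof
    fix i assume i: "i \<in> I"
    have "bounded (K i)" using Kp i bounded_subset[OF bounded_closed_interval[of 0 1]] by blast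
    thus "compact (K i)" using Kp i compact_eq_bounded_closed by blast
  qed
  hence cS: "closed S" unfolding S_def using sums_compact[OF fin, of K] compact_imp_closed by blast
  have mpos: "real m > 0"
  proof (rule ccontr)
    assume "\<not> real m > 0"
    hence "m = 0" by simp
    thus False using cond t0 by simp
  qed
  have approx: "\<exists>s\<in>S. dist s t \<le> real m * \<xi> ^ n" for n
  proof -
    obtain a b where ab: "\<forall>i\<in>I. bridge (K i) (\<xi> ^ n) (a i) (b i)" "sum a I \<le> t" "t \<le> sum b I"
      using claim by blast
    define A where "A = sum a I"
    define B where "B = sum b I"
    define lam where "lam = (if B = A then 0 else (t - A) / (B - A))"
    have lam: "0 \<le> lam" "lam \<le> 1" "A + lam * (B - A) = t"
      using ab unfolding lam_def A_def B_def by (auto simp: field_simps)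
    define y where "y i = a i + lam * (b i - a i)" for i
    have abi: "\<forall>i\<in>I. a i \<le> b i" using ab unfolding bridge_def by auto
    have yab: "a i \<le> y i \<and> y i \<le> b i" if "i \<in> I" for i
    proof -
      have "0 \<le> lam * (b i - a i)" using lam abi that by simp
      moreover have "lam * (b i - a i) \<le> 1 * (b i - a i)" using lam abi that by (intro mult_right_mono) auto
      ultimately show ?thesis unfolding y_def by simp
    qed
    have sy: "sum y I = t"
      unfolding y_def using lam unfolding A_def B_def
      by (simp add: sum.distrib sum_distrib_left[symmetric] sum_subtractf)
    have "\<forall>i\<in>I. \<exists>w. w \<in> K i \<and> y i - \<xi> ^ n \<le> w \<and> w \<le> y i"
    proof
      fix i assume i: "i \<in> I"
      show "\<exists>w. w \<in> K i \<and> y i - \<xi> ^ n \<le> w \<and> w \<le> y i"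
      proof -
        have br: "bridge (K i) (\<xi> ^ n) (a i) (b i)" using ab(1) i by blast
        have cl: "closed (K i)" using Kp i by blast
        have pp: "0 < \<xi> ^ n" using \<xi> by simp
        have "\<exists>z\<in>K i. a i \<le> z \<and> z \<le> b i \<and> y i - \<xi> ^ n \<le> z \<and> z \<le> y i"
          by (rule bridge_window[OF br cl]) (use yab[OF i] pp in auto)
        thus ?thesis by blast
      qed
    qed
    from bchoice[OF this] obtain z where z: "\<forall>i\<in>I. z i \<in> K i \<and> y i - \<xi> ^ n \<le> z i \<and> z i \<le> y i"
      by blast
    have "sum z I \<in> S" unfolding S_def using z by blast
    moreover have "dist (sum z I) t \<le> real m * \<xi> ^ n"
    proof -
      have "t - sum z I = (\<Sum>i\<in>I. y i - z i)" using sy by (simp add: sum_subtractf)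
      moreover have "(\<Sum>i\<in>I. y i - z i) \<le> (\<Sum>i\<in>I. \<xi> ^ n)" using z by (intro sum_mono) auto
      moreover have "(\<Sum>i\<in>I. y i - z i) \<ge> 0" using z by (intro sum_nonneg) auto
      ultimately show ?thesis using m by (simp add: dist_real_def)
    qed
    ultimately show ?thesis by blast
  qed
  have "t \<in> S"
  proof (rule iffD1[OF closed_approachable[OF cS]], intro allI impI)
    fix e :: real assume e: "e > 0"
    obtain n where n: "\<xi> ^ n < e / real m" using real_arch_pow_inv[of "e / real m" \<xi>] e mpos \<xi> by auto
    hence "real m * \<xi> ^ n < e" using mpos by (simp add: field_simps)
    thus "\<exists>y\<in>S. dist y t < e" using approx[of n] by force
  qed
  thus ?thesis unfolding S_def by blast
qed


lemma pow_diff_bounds: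
  fixes x y :: real
  assumes "0 \<le> x" "x \<le> y"
  shows "(y - x) * (real c * x^(c-1)) \<le> y^c - x^c" "y^c - x^c \<le> (y - x) * (real c * y^(c-1))"
proof -
  have eq: "y^c - x^c = (y - x) * (\<Sum>i<c. x^(c - Suc i) * y^i)" by (rule power_diff_sumr2)
  have lo: "x^(c-1) \<le> x^(c - Suc i) * y^i" if "i < c" for i
  proof -
    have "x^(c - Suc i) * x^i \<le> x^(c - Suc i) * y^i"
      using assms by (intro mult_left_mono power_mono) auto
    moreover have "x^(c - Suc i) * x^i = x^(c-1)" using that by (simp add: power_add[symmetric])
    ultimately show ?thesis by simp
  qed
  have hi: "x^(c - Suc i) * y^i \<le> y^(c-1)" if "i < c" for i
  proof -
    have "x^(c - Suc i) * y^i \<le> y^(c - Suc i) * y^i"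
      using assms by (intro mult_right_mono power_mono) auto
    moreover have "y^(c - Suc i) * y^i = y^(c-1)" using that by (simp add: power_add[symmetric])
    ultimately show ?thesis by simp
  qed
  have s1: "real c * x^(c-1) \<le> (\<Sum>i<c. x^(c - Suc i) * y^i)"
    using sum_mono[of "{..<c}" "\<lambda>i. x^(c-1)" "\<lambda>i. x^(c - Suc i) * y^i"] lo by simp
  have s2: "(\<Sum>i<c. x^(c - Suc i) * y^i) \<le> real c * y^(c-1)"
    using sum_mono[of "{..<c}" "\<lambda>i. x^(c - Suc i) * y^i" "\<lambda>i. y^(c-1)"] hi by simp
  have yx: "0 \<le> y - x" using assms by simp
  show "(y - x) * (real c * x^(c-1)) \<le> y^c - x^c" unfolding eq using s1 yx by (rule mult_left_mono)
  show "y^c - x^c \<le> (y - x) * (real c * y^(c-1))" unfolding eq using s2 yx by (rule mult_left_mono)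
qed

lemma binom_ineq:
  fixes p u k :: real
  assumes "0 \<le> p" "0 \<le> u" "1 \<le> k"
  shows "(p + k*u)^c - p^c \<le> k^c * ((p + u)^c - p^c)"
proof -
  define g where "g j = real (c choose j) * (k^j - k^c) * u^j * p^(c-j)" for j
  have b1: "(k*u + p)^c = (\<Sum>j\<le>c. real (c choose j) * (k*u)^j * p^(c-j))" by (rule binomial_ring)
  have b2: "(u + p)^c = (\<Sum>j\<le>c. real (c choose j) * u^j * p^(c-j))" by (rule binomial_ring)
  have "(p + k*u)^c - k^c * (p + u)^c = (\<Sum>j\<le>c. g j)"
    unfolding g_def using b1 b2
    by (simp add: add.commute sum_distrib_left sum_subtractf[symmetric] algebra_simps power_mult_distrib)
  also have "\<dots> = g 0 + (\<Sum>j\<in>{..c} - {0}. g j)" by (simp add: sum.remove)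
  also have "\<dots> \<le> g 0 + 0"
  proof -
    have "g j \<le> 0" if "j \<in> {..c} - {0}" for j
    proof -
      have "k^j \<le> k^c" using that assms by (intro power_increasing) auto
      hence "(k^j - k^c) \<le> 0" by simp
      moreover have "0 \<le> real (c choose j) * u^j * p^(c-j)" using assms by simp
      ultimately have "real (c choose j) * u^j * p^(c-j) * (k^j - k^c) \<le> 0"
        by (simp add: mult_nonneg_nonpos)
      thus ?thesis unfolding g_def by (simp add: algebra_simps)
    qed
    hence "sum g ({..c} - {0}) \<le> 0" by (intro sum_nonpos) blast
    thus ?thesis by simp
  qed
  also have "g 0 = (1 - k^c) * p^c" unfolding g_def by simp
  finally show ?thesis by (simp add: algebra_simps)
qed


lemma T1:
  fixes r P h \<tau> :: real
  assumes r: "0 < r" "r < 1/2" and P: "0 \<le> P" and h: "0 < h" and t: "0 \<le> \<tau>"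
    and H1: "\<tau> * (((1-r)/r)^c - 1) \<le> 1"
  shows "\<tau> * ((P + h*(1-r))^c - (P + h*r)^c) \<le> (P + h*r)^c - P^c"
proof -
  define k where "k = (1-r)/r"
  have k1: "1 \<le> k" unfolding k_def using r by (simp add: field_simps)
  have kk: "P + k*(h*r) = P + h*(1-r)" unfolding k_def using r by (simp add: field_simps)
  define L where "L = (P + h*r)^c - P^c"
  have L0: "0 \<le> L" unfolding L_def using P h r by (simp add: power_mono)
  have M: "(P + h*(1-r))^c - P^c \<le> k^c * L"
    using binom_ineq[of P "h*r" k c] P h r k1 kk unfolding L_def by simp
  have G: "(P + h*(1-r))^c - (P + h*r)^c \<le> (k^c - 1) * L" using M unfolding L_def by (simp add: algebra_simps)
  have "\<tau> * ((P + h*(1-r))^c - (P + h*r)^c) \<le> \<tau> * ((k^c - 1) * L)" using G t by (rule mult_left_mono)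
  also have "\<dots> = (\<tau> * (k^c - 1)) * L" by simp
  also have "\<dots> \<le> 1 * L" using H1 L0 unfolding k_def by (intro mult_right_mono) auto
  finally show ?thesis unfolding L_def by simp
qed

lemma T2:
  fixes r P h \<tau> :: real
  assumes r: "0 < r" "r < 1/2" and P: "0 \<le> P" and h: "0 < h" and t: "0 \<le> \<tau>"
    and H2: "\<tau> * (1 - 2*r) \<le> r"
  shows "\<tau> * ((P + h*(1-r))^c - (P + h*r)^c) \<le> (P + h)^c - (P + h*(1-r))^c"
proof -
  define b where "b = P + h*(1-r)"
  define X where "X = real c * b^(c-1)"
  have X0: "0 \<le> X" unfolding X_def b_def using P h r by simp
  have "(P + h*(1-r))^c - (P + h*r)^c \<le> (b - (P + h*r)) * X"
    unfolding X_def b_def using pow_diff_bounds(2)[of "P + h*r" "P + h*(1-r)" c] P h r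
    by (simp add: mult_left_mono)
  also have "b - (P + h*r) = h * (1 - 2*r)" unfolding b_def by (simp add: algebra_simps)
  finally have G: "(P + h*(1-r))^c - (P + h*r)^c \<le> h * (1 - 2*r) * X" .
  have R: "(P + h - b) * X \<le> (P + h)^c - (P + h*(1-r))^c"
  proof -
    have "0 \<le> h*(1-r)" "h*(1-r) \<le> h" using h r by (auto simp: mult_left_le)
    hence "0 \<le> P + h*(1-r)" "P + h*(1-r) \<le> P + h" using P by auto
    from pow_diff_bounds(1)[OF this, of c] show ?thesis unfolding X_def b_def by simp
  qed
  have "P + h - b = h * r" unfolding b_def by (simp add: algebra_simps)
  have "\<tau> * ((P + h*(1-r))^c - (P + h*r)^c) \<le> \<tau> * (h * (1 - 2*r) * X)" using G t by (rule mult_left_mono)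
  also have "\<dots> = (\<tau> * (1 - 2*r)) * (h * X)" by (simp add: algebra_simps)
  also have "\<dots> \<le> r * (h * X)" using H2 h X0 by (intro mult_right_mono) auto
  also have "\<dots> = (P + h - b) * X" using \<open>P + h - b = h * r\<close> by simp
  finally show ?thesis using R by linarith
qed

lemma T3:
  fixes r P h \<tau> P2 h2 :: real
  assumes r: "0 < r" "r < 1/2" and P: "0 \<le> P" and h: "0 < h" and t: "0 \<le> \<tau>"
    and H2: "\<tau> * (1 - 2*r) \<le> r * (1-r)^(c-1)"
    and P2: "P + h*(1-r) \<le> P2" and h2: "0 < h2" and b2: "P2 + h2*(1-r) \<le> P + h"
    and GG: "(P + h*(1-r))^c - (P + h*r)^c \<le> (P2 + h2*(1-r))^c - (P2 + h2*r)^c"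
  shows "\<tau> * ((P + h*(1-r))^c - (P + h*r)^c) \<le> (P2 + h2*r)^c - (P + h*(1-r))^c"
proof -
  define b where "b = P + h*(1-r)"
  have b0: "0 \<le> b" unfolding b_def using P h r by simp
  have "(P2 + h2*(1-r))^c - (P2 + h2*r)^c \<le> ((P2 + h2*(1-r)) - (P2 + h2*r)) * (real c * (P2 + h2*(1-r))^(c-1))"
    using pow_diff_bounds(2)[of "P2 + h2*r" "P2 + h2*(1-r)" c] P P2 h h2 r b0 unfolding b_def by simp
  also have "\<dots> \<le> (h2 * (1 - 2*r)) * (real c * (P + h)^(c-1))"
  proof -
    have "(P2 + h2*(1-r))^(c-1) \<le> (P + h)^(c-1)"
    proof -
      have "0 \<le> h2*(1-r)" using h2 r by simp
      hence "0 \<le> P2 + h2*(1-r)" using P2 b0 unfolding b_def by linarith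
      thus ?thesis using b2 by (intro power_mono) auto
    qed
    moreover have "(P2 + h2*(1-r)) - (P2 + h2*r) = h2 * (1 - 2*r)" by (simp add: algebra_simps)
    moreover have "0 \<le> h2 * (1 - 2*r)" using h2 r by simp
    ultimately show ?thesis by (simp add: mult_left_mono)
  qed
  finally have G2: "(P2 + h2*(1-r))^c - (P2 + h2*r)^c \<le> h2 * (1 - 2*r) * (real c * (P + h)^(c-1))" by simp
  have "\<tau> * ((P + h*(1-r))^c - (P + h*r)^c) \<le> \<tau> * (h2 * (1 - 2*r) * (real c * (P + h)^(c-1)))"
    using GG G2 t by (intro mult_left_mono) auto
  also have "\<dots> = (\<tau> * (1 - 2*r)) * (h2 * real c * (P + h)^(c-1))" by (simp add: algebra_simps)
  also have "\<dots> \<le> (r * (1-r)^(c-1)) * (h2 * real c * (P + h)^(c-1))"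
    using H2 h2 P h by (intro mult_right_mono) auto
  also have "\<dots> = r * h2 * real c * ((1-r) * (P + h))^(c-1)" by (simp add: power_mult_distrib)
  also have "\<dots> \<le> r * h2 * real c * b^(c-1)"
  proof -
    have "(1-r) * (P + h) \<le> b" unfolding b_def using P r by (simp add: algebra_simps)
    hence "((1-r) * (P + h))^(c-1) \<le> b^(c-1)" using r P h by (intro power_mono) auto
    thus ?thesis using r h2 by (intro mult_left_mono) auto
  qed
  also have "\<dots> \<le> ((P2 + h2*r) - b) * (real c * b^(c-1))"
  proof -
    have "h2 * r \<le> (P2 + h2*r) - b" using P2 unfolding b_def by simp
    hence "h2 * r * (real c * b^(c-1)) \<le> ((P2 + h2*r) - b) * (real c * b^(c-1))"
      using b0 by (intro mult_right_mono) auto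
    thus ?thesis by (simp add: algebra_simps)
  qed
  also have "\<dots> \<le> (P2 + h2*r)^c - b^c"
  proof -
    have "b \<le> P2 + h2*r" using P2 h2 r unfolding b_def by (simp add: add_increasing2)
    from pow_diff_bounds(1)[OF b0 this, of c] show ?thesis by simp
  qed
  finally show ?thesis unfolding b_def .
qed

lemma T4:
  fixes r P h P2 h2 :: real
  assumes r: "0 < r" "r < 1/2" and P: "0 \<le> P" and h: "0 < h" and c: "c \<ge> 1"
    and P2: "P \<le> P2" and h2: "0 < h2" "h2 \<le> r * h" and b2: "P2 + h2*(1-r) \<le> P + h*r"
  shows "(P2 + h2*(1-r))^c - (P2 + h2*r)^c < (P + h*(1-r))^c - (P + h*r)^c"
proof -
  define a where "a = P + h*r"
  have a0: "0 < a" unfolding a_def using P mult_pos_pos[OF h r(1)] by simp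
  define X where "X = real c * a^(c-1)"
  have X0: "0 < X" unfolding X_def using a0 c by simp
  have "(P2 + h2*(1-r))^c - (P2 + h2*r)^c \<le> ((P2 + h2*(1-r)) - (P2 + h2*r)) * (real c * (P2 + h2*(1-r))^(c-1))"
    using pow_diff_bounds(2)[of "P2 + h2*r" "P2 + h2*(1-r)" c] P P2 h2 r by simp
  also have "\<dots> \<le> (r * h * (1 - 2*r)) * X"
  proof -
    have "(P2 + h2*(1-r))^(c-1) \<le> a^(c-1)"
      using b2 P P2 h2 r unfolding a_def by (intro power_mono) auto
    moreover have "(P2 + h2*(1-r)) - (P2 + h2*r) = h2 * (1 - 2*r)" by (simp add: algebra_simps)
    moreover have "h2 * (1 - 2*r) \<le> r * h * (1 - 2*r)" using h2 r by (intro mult_right_mono) auto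
    moreover have "0 \<le> h2 * (1 - 2*r)" using h2 r by simp
    moreover have "0 \<le> P2 + h2*(1-r)" using P P2 h2 r by (simp add: add_nonneg_nonneg)
    ultimately have "(h2 * (1 - 2*r)) * (real c * (P2 + h2*(1-r))^(c-1)) \<le> (r * h * (1 - 2*r)) * (real c * a^(c-1))"
    proof -
      assume A: "(P2 + h2*(1-r))^(c-1) \<le> a^(c-1)" "(P2 + h2*(1-r)) - (P2 + h2*r) = h2 * (1 - 2*r)"
        "h2 * (1 - 2*r) \<le> r * h * (1 - 2*r)" "0 \<le> h2 * (1 - 2*r)" "0 \<le> P2 + h2*(1-r)"
      have A2: "real c * (P2 + h2*(1-r))^(c-1) \<le> real c * a^(c-1)" using A(1) by (intro mult_left_mono) auto
      have A3: "0 \<le> r * h * (1 - 2*r)" using r h by simp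
      have A4: "0 \<le> real c * (P2 + h2*(1-r))^(c-1)" using A(5) by simp
      show ?thesis by (rule mult_mono[OF A(3) A2 A3 A4])
    qed
    thus ?thesis unfolding X_def using \<open>(P2 + h2*(1-r)) - (P2 + h2*r) = h2 * (1 - 2*r)\<close> by simp
  qed
  also have "\<dots> < (h * (1 - 2*r)) * X"
  proof -
    have "0 < h * (1 - 2*r) * X" using h r X0 by simp
    hence "r * (h * (1 - 2*r) * X) < 1 * (h * (1 - 2*r) * X)" using r by (intro mult_strict_right_mono) auto
    thus ?thesis by (simp add: algebra_simps)
  qed
  also have "\<dots> \<le> (P + h*(1-r))^c - (P + h*r)^c"
  proof -
    have "(P + h*(1-r)) - a = h * (1 - 2*r)" unfolding a_def by (simp add: algebra_simps)
    moreover have "a \<le> P + h*(1-r)" unfolding a_def using h r by (simp add: mult_left_mono)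
    ultimately show ?thesis using pow_diff_bounds(1)[of a "P + h*(1-r)" c] a0 unfolding X_def a_def by simp
  qed
  finally show ?thesis .
qed


context
  fixes \<alpha> :: real
  assumes a1: "\<alpha> > 1"
begin

lemma bint_Nil: "bint \<alpha> [] = {0..1}" unfolding bint_def by simp

lemma inner_gap:
  assumes ab: "a < b" and aC: "a \<in> cantor \<alpha>" and bC: "b \<in> cantor \<alpha>"
    and gap: "\<forall>z\<in>cantor \<alpha>. z \<le> a \<or> b \<le> z"
    and aw: "a \<in> bint \<alpha> w" and bw: "b \<in> bint \<alpha> w"
  shows "\<exists>P2 h2. a = P2 + h2 * cratio \<alpha> \<and> b = P2 + h2 * (1 - cratio \<alpha>) \<and> P2 \<in> bint \<alpha> w
     \<and> 0 < h2 \<and> h2 \<le> cratio \<alpha> ^ length w"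
proof -
  obtain v where v: "a = fword \<alpha> (w@v) (cratio \<alpha>)" "b = fword \<alpha> (w@v) (1 - cratio \<alpha>)"
    using cantor_gap[OF a1 ab aC bC gap aw bw] by blast
  define P2 where "P2 = fword \<alpha> (w@v) 0"
  define h2 where "h2 = cratio \<alpha> ^ length (w@v)"
  have "a = P2 + h2 * cratio \<alpha>" "b = P2 + h2 * (1 - cratio \<alpha>)"
    unfolding P2_def h2_def v by (rule fword_affine)+
  moreover have "P2 \<in> bint \<alpha> w"
  proof -
    have "P2 = fword \<alpha> w (fword \<alpha> v 0)" unfolding P2_def by (simp add: fword_append)
    moreover have "fword \<alpha> v 0 \<in> {0..1}" using fword_01[OF a1] by simp
    ultimately show ?thesis using img_bint[OF a1, of w] by blast
  qed
  moreover have "0 < h2" unfolding h2_def using r_pos[OF a1] by simp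
  moreover have "h2 \<le> cratio \<alpha> ^ length w" unfolding h2_def
    using r_pos[OF a1] r_half[OF a1] by (intro power_decreasing) auto
  ultimately show ?thesis by blast
qed

lemma Kgap:
  assumes c: "c \<ge> 1" and g: "gapK ((\<lambda>x. x^c) ` cantor \<alpha>) x y"
  shows "\<exists>a b. x = a^c \<and> y = b^c \<and> a < b \<and> a \<in> cantor \<alpha> \<and> b \<in> cantor \<alpha> \<and> (\<forall>z\<in>cantor \<alpha>. z \<le> a \<or> b \<le> z)"
proof -
  obtain a where a: "a \<in> cantor \<alpha>" "x = a^c" using g unfolding gapK_def by blast
  obtain b where b: "b \<in> cantor \<alpha>" "y = b^c" using g unfolding gapK_def by blast
  have a0: "0 \<le> a" and b0: "0 \<le> b" using cantor_01[OF a1] a b by auto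
  have "a^c < b^c" using g a b unfolding gapK_def by auto
  hence "a < b" using power_less_imp_less_base b0 by blast
  moreover have "\<forall>z\<in>cantor \<alpha>. z \<le> a \<or> b \<le> z"
  proof
    fix z assume z: "z \<in> cantor \<alpha>"
    have z0: "0 \<le> z" using cantor_01[OF a1 z] by simp
    have zi: "z^c \<in> (\<lambda>x. x^c) ` cantor \<alpha>" using z by blast
    have "z^c \<le> x \<or> y \<le> z^c" using g zi unfolding gapK_def by blast
    hence "z^c \<le> a^c \<or> b^c \<le> z^c" using a(2) b(2) by simp
    thus "z \<le> a \<or> b \<le> z" using z0 a0 b0 c by simp
  qed
  ultimately show ?thesis using a b by blast
qed

lemma Cgap_word:
  assumes ab: "a < b" and aC: "a \<in> cantor \<alpha>" and bC: "b \<in> cantor \<alpha>"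
    and gap: "\<forall>z\<in>cantor \<alpha>. z \<le> a \<or> b \<le> z"
  shows "\<exists>w. a = fword \<alpha> w 0 + cratio \<alpha> ^ length w * cratio \<alpha> \<and>
      b = fword \<alpha> w 0 + cratio \<alpha> ^ length w * (1 - cratio \<alpha>)"
proof -
  have "a \<in> bint \<alpha> []" "b \<in> bint \<alpha> []" using cantor_01[OF a1] aC bC bint_Nil by auto
  then obtain v where "a = fword \<alpha> ([]@v) (cratio \<alpha>)" "b = fword \<alpha> ([]@v) (1 - cratio \<alpha>)"
    using cantor_gap[OF a1 ab aC bC gap] by blast
  thus ?thesis using fword_affine[of \<alpha> v "cratio \<alpha>"] fword_affine[of \<alpha> v "1 - cratio \<alpha>"]
    by (intro exI[of _ v]) simp
qed

lemma thick_pow: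
  assumes c: "c \<ge> 1" and t: "0 < \<tau>"
    and H1: "\<tau> * (((1 - cratio \<alpha>)/cratio \<alpha>)^c - 1) \<le> 1"
    and H2: "\<tau> * (1 - 2 * cratio \<alpha>) \<le> cratio \<alpha> * (1 - cratio \<alpha>)^(c-1)"
  shows "thick ((\<lambda>x. x^c) ` cantor \<alpha>) \<tau>"
proof -
  let ?r = "cratio \<alpha>"
  let ?K = "(\<lambda>x. x^c) ` cantor \<alpha>"
  have r: "0 < ?r" "?r < 1/2" using r_pos[OF a1] r_half[OF a1] by auto
  have H2': "\<tau> * (1 - 2 * ?r) \<le> ?r"
  proof -
    have "(1 - ?r)^(c-1) \<le> 1" using r by (intro power_le_one) auto
    hence "?r * (1 - ?r)^(c-1) \<le> ?r * 1" using r by (intro mult_left_mono) auto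
    thus ?thesis using H2 by simp
  qed
  have tt: "0 \<le> \<tau>" using t by simp
  have stp: "\<exists>P h w. a = P + h * ?r \<and> b = P + h * (1 - ?r) \<and> 0 \<le> P \<and> 0 < h \<and> P + h \<le> 1
       \<and> P = fword \<alpha> w 0 \<and> h = ?r ^ length w"
    if asm: "a < b" "a \<in> cantor \<alpha>" "b \<in> cantor \<alpha>" "\<forall>z\<in>cantor \<alpha>. z \<le> a \<or> b \<le> z" for a b
  proof -
    obtain w where w: "a = fword \<alpha> w 0 + ?r ^ length w * ?r" "b = fword \<alpha> w 0 + ?r ^ length w * (1 - ?r)"
      using Cgap_word[OF asm] by blast
    have "fword \<alpha> w 0 \<in> bint \<alpha> w" "fword \<alpha> w 0 + ?r ^ length w \<in> bint \<alpha> w"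
      unfolding bint_def using r by auto
    hence "0 \<le> fword \<alpha> w 0" "fword \<alpha> w 0 + ?r ^ length w \<le> 1" using bint_01[OF a1, of w] by auto
    moreover have "0 < ?r ^ length w" using r by simp
    ultimately show ?thesis using w by blast
  qed
  show ?thesis unfolding thick_def
  proof (intro conjI allI impI)
    fix x y assume g: "gapK ?K x y"
    obtain a b where ab: "x = a^c" "y = b^c" "a < b" "a \<in> cantor \<alpha>" "b \<in> cantor \<alpha>"
      "\<forall>z\<in>cantor \<alpha>. z \<le> a \<or> b \<le> z" using Kgap[OF c g] by blast
    obtain P h w where Ph: "a = P + h * ?r" "b = P + h * (1 - ?r)" "0 \<le> P" "0 < h" "P + h \<le> 1"
      using stp[OF ab(3-6)] by blast
    have e1: "\<tau> * (b^c - a^c) \<le> a^c - P^c" using T1[OF r Ph(3,4) tt H1] Ph by simp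
    have "0 \<le> P^c" using Ph by simp
    thus "\<tau> * (y - x) \<le> x" using e1 unfolding ab(1,2) by linarith
    have e2: "\<tau> * (b^c - a^c) \<le> (P + h)^c - b^c" using T2[OF r Ph(3,4) tt H2'] Ph by simp
    have "(P + h)^c \<le> 1" using Ph by (intro power_le_one) auto
    thus "\<tau> * (y - x) \<le> 1 - y" using e2 unfolding ab(1,2) by linarith
  next
    fix x y x' y' assume g: "gapK ?K x y" and g': "gapK ?K x' y'" and yx: "y' \<le> x" and len: "y - x \<le> y' - x'"
    obtain a b where ab: "x = a^c" "y = b^c" "a < b" "a \<in> cantor \<alpha>" "b \<in> cantor \<alpha>"
      "\<forall>z\<in>cantor \<alpha>. z \<le> a \<or> b \<le> z" using Kgap[OF c g] by blast
    obtain a' b' where ab': "x' = a'^c" "y' = b'^c" "a' < b'" "a' \<in> cantor \<alpha>" "b' \<in> cantor \<alpha>"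
      "\<forall>z\<in>cantor \<alpha>. z \<le> a' \<or> b' \<le> z" using Kgap[OF c g'] by blast
    obtain P h w where Ph: "a = P + h * ?r" "b = P + h * (1 - ?r)" "0 \<le> P" "0 < h" "P + h \<le> 1"
      "P = fword \<alpha> w 0" "h = ?r ^ length w"
      using stp[OF ab(3-6)] by blast
    have a0': "0 \<le> a'" "0 \<le> b'" using cantor_01[OF a1] ab' by auto
    have a0: "0 \<le> a" using cantor_01[OF a1] ab by auto
    have ba: "b' \<le> a" using yx ab ab' a0 a0' c by simp
    have bP: "b' \<le> P"
    proof (rule ccontr)
      assume "\<not> b' \<le> P"
      hence Pa: "P \<le> a'" using ab'(6) fword_0_cantor[OF a1, of w] Ph(6) by force
      have "a' \<in> bint \<alpha> (w@[False])" "b' \<in> bint \<alpha> (w@[False])"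
        unfolding bint_False[OF a1] using Pa ab' ba Ph by (auto simp: mult.commute)
      then obtain P2 h2 where P2: "a' = P2 + h2 * ?r" "b' = P2 + h2 * (1 - ?r)" "P2 \<in> bint \<alpha> (w@[False])"
        "0 < h2" "h2 \<le> ?r ^ length (w@[False])"
        using inner_gap[OF ab'(3-6)] by blast
      have "P \<le> P2" using P2(3) unfolding bint_False[OF a1] Ph(6) by simp
      moreover have "h2 \<le> ?r * h" using P2(5) Ph(7) by (simp add: mult.commute)
      moreover have "P2 + h2 * (1 - ?r) \<le> P + h * ?r" using P2 ba Ph by simp
      ultimately have "(P2 + h2*(1-?r))^c - (P2 + h2*?r)^c < (P + h*(1-?r))^c - (P + h*?r)^c"
        using T4[OF r Ph(3,4) c] P2(4) by blast
      thus False using len ab ab' P2 Ph by simp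
    qed
    have e1: "\<tau> * (b^c - a^c) \<le> a^c - P^c" using T1[OF r Ph(3,4) tt H1] Ph by simp
    have "b'^c \<le> P^c" using bP a0' by (intro power_mono) auto
    thus "\<tau> * (y - x) \<le> x - y'" using e1 unfolding ab(1,2) ab'(1,2) by linarith
  next
    fix x y x' y' assume g: "gapK ?K x y" and g': "gapK ?K x' y'" and yx: "y \<le> x'" and len: "y - x \<le> y' - x'"
    obtain a b where ab: "x = a^c" "y = b^c" "a < b" "a \<in> cantor \<alpha>" "b \<in> cantor \<alpha>"
      "\<forall>z\<in>cantor \<alpha>. z \<le> a \<or> b \<le> z" using Kgap[OF c g] by blast
    obtain a' b' where ab': "x' = a'^c" "y' = b'^c" "a' < b'" "a' \<in> cantor \<alpha>" "b' \<in> cantor \<alpha>"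
      "\<forall>z\<in>cantor \<alpha>. z \<le> a' \<or> b' \<le> z" using Kgap[OF c g'] by blast
    obtain P h w where Ph: "a = P + h * ?r" "b = P + h * (1 - ?r)" "0 \<le> P" "0 < h" "P + h \<le> 1"
      "P = fword \<alpha> w 0" "h = ?r ^ length w"
      using stp[OF ab(3-6)] by blast
    have a0': "0 \<le> a'" "0 \<le> b'" using cantor_01[OF a1] ab' by auto
    have b0: "0 \<le> b" using cantor_01[OF a1] ab by auto
    have ba: "b \<le> a'" using yx ab ab' b0 a0' c by simp
    show "\<tau> * (y - x) \<le> x' - y"
    proof (cases "P + h \<le> a'")
      case True
      have e2: "\<tau> * (b^c - a^c) \<le> (P + h)^c - b^c" using T2[OF r Ph(3,4) tt H2'] Ph by simp
      have "(P + h)^c \<le> a'^c" using True Ph by (intro power_mono) auto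
      thus ?thesis using e2 unfolding ab(1,2) ab'(1,2) by linarith
    next
      case False
      have Ph1: "P + h = fword \<alpha> w 1" using fword_affine[of \<alpha> w 1] Ph by simp
      have bPh: "b' \<le> P + h" using ab'(6) fword_1_cantor[OF a1, of w] Ph1 False by force
      have "a' \<in> bint \<alpha> (w@[True])" "b' \<in> bint \<alpha> (w@[True])"
        unfolding bint_True[OF a1] using ab' ba Ph bPh by (auto simp: mult.commute)
      then obtain P2 h2 where P2: "a' = P2 + h2 * ?r" "b' = P2 + h2 * (1 - ?r)" "P2 \<in> bint \<alpha> (w@[True])"
        "0 < h2" "h2 \<le> ?r ^ length (w@[True])"
        using inner_gap[OF ab'(3-6)] by blast
      have P2b: "P + h * (1 - ?r) \<le> P2" using P2(3) unfolding bint_True[OF a1] Ph(6,7) by (simp add: mult.commute)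
      have b2: "P2 + h2 * (1 - ?r) \<le> P + h" using P2 bPh by simp
      have GG: "(P + h*(1-?r))^c - (P + h*?r)^c \<le> (P2 + h2*(1-?r))^c - (P2 + h2*?r)^c"
        using len ab ab' P2 Ph by simp
      have "\<tau> * ((P + h*(1-?r))^c - (P + h*?r)^c) \<le> (P2 + h2*?r)^c - (P + h*(1-?r))^c"
        using T3[OF r Ph(3,4) tt H2 P2b P2(4) b2 GG] .
      thus ?thesis using ab ab' P2 Ph by simp
    qed
  qed
qed

end


lemma max3:
  fixes u v w y :: real
  assumes "Max {u, v, w} \<le> y"
  shows "v \<le> y" "w \<le> y"
proof -
  have "v \<le> Max {u, v, w}" "w \<le> Max {u, v, w}" by (rule Max_ge; simp)+
  thus "v \<le> y" "w \<le> y" using assms by linarith+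
qed

lemma numeric:
  fixes r m :: real and A s :: nat
  assumes r: "0 < r" "r < 1/2" and A: "1 \<le> A" and s: "2*A \<le> s"
    and h2: "((1-r)/r)^(A+1) \<le> m" and h3: "(1/(1-r))^(s-1) + 1 \<le> m"
  shows "(m - 1) * min 1 (min (1/(((1-r)/r)^A - 1)) (r*(1-r)^(A-1)/(1-2*r))) > 1"
proof -
  define p where "p = 1 - r"
  define q where "q = p / r"
  have p: "0 < p" "p < 1" unfolding p_def using r by auto
  have q1: "1 < q" unfolding q_def p_def using r by (simp add: field_simps)
  have qr: "q * r = p" unfolding q_def using r by simp
  have ip: "1 < 1/p" using p by simp
  have t1: "(m - 1) * 1 > 1"
  proof -
    have "1 < (1/p)^(s-1)" using ip s A by (intro one_less_power) auto
    thus ?thesis using h3 unfolding p_def by simp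
  qed
  have t2: "(m - 1) * (1/(q^A - 1)) > 1"
  proof -
    have qA: "1 < q^A" using q1 A by (intro one_less_power) auto
    have "q^A < q^(A+1)" using q1 by (intro power_strict_increasing) auto
    hence "q^A - 1 < m - 1" using h2 unfolding q_def p_def by simp
    thus ?thesis using qA by (simp add: field_simps)
  qed
  have t3': "(m - 1) * (r * p^(A-1)) > 1 - 2*r"
  proof (cases "r \<ge> 1/3")
    case True
    have "(1/p)^(2*A-1) \<le> (1/p)^(s-1)" using ip s by (intro power_increasing) auto
    hence m1: "(1/p)^(2*A-1) \<le> m - 1" using h3 unfolding p_def by simp
    have eq: "(1/p)^(2*A-1) * p^(A-1) = (1/p)^A"
    proof -
      have "2*A - 1 = A + (A - 1)" using A by simp
      hence "(1/p)^(2*A-1) = (1/p)^A * (1/p)^(A-1)" by (simp only: power_add)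
      moreover have "(1/p)^(A-1) * p^(A-1) = 1" using p by (simp add: power_mult_distrib[symmetric])
      ultimately show ?thesis by (simp add: mult.assoc)
    qed
    have "r * (1/p)^A > r * 1" using r ip A by (intro mult_strict_left_mono one_less_power) auto
    moreover have "(m - 1) * (r * p^(A-1)) \<ge> (1/p)^(2*A-1) * (r * p^(A-1))"
      using m1 r p by (intro mult_right_mono) auto
    moreover have "(1/p)^(2*A-1) * (r * p^(A-1)) = r * (1/p)^A" using eq by (simp add: algebra_simps)
    ultimately show ?thesis using True by linarith
  next
    case False
    have m1: "q^(A+1) - 1 \<le> m - 1" using h2 unfolding q_def p_def by simp
    have eq: "q^(A+1) * (r * p^(A-1)) = (q*p)^A"
    proof -
      have "q^(A+1) * (r * p^(A-1)) = q^A * (q * r) * p^(A-1)" by (simp add: algebra_simps)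
      also have "\<dots> = q^A * (p * p^(A-1))" using qr by (simp add: algebra_simps)
      also have "p * p^(A-1) = p^A" using A by (simp add: power_eq_if)
      finally show ?thesis by (simp add: power_mult_distrib)
    qed
    have qp: "1 < q * p"
    proof -
      have e: "p * p = 1 - 2*r + r*r" unfolding p_def by (simp add: algebra_simps)
      have "0 \<le> r*r" by simp
      hence "r < p * p" using e False by linarith
      hence "1 < p * p / r" using r by (simp add: field_simps)
      thus ?thesis unfolding q_def by (simp add: algebra_simps)
    qed
    have qpA: "1 < (q*p)^A" using qp A by (intro one_less_power) auto
    have pA: "r * p^(A-1) \<le> r * 1" using p r by (intro mult_left_mono power_le_one) auto
    have "(m - 1) * (r * p^(A-1)) \<ge> (q^(A+1) - 1) * (r * p^(A-1))"
      using m1 r p by (intro mult_right_mono) auto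
    moreover have "(q^(A+1) - 1) * (r * p^(A-1)) = (q*p)^A - r * p^(A-1)" using eq by (simp add: algebra_simps)
    ultimately show ?thesis using qpA pA r by linarith
  qed
  have t3: "(m - 1) * (r*(1-r)^(A-1)/(1-2*r)) > 1"
  proof -
    have "0 < 1 - 2*r" using r by simp
    thus ?thesis using t3' unfolding p_def by (simp add: field_simps)
  qed
  have "min 1 (min (1/(((1-r)/r)^A - 1)) (r*(1-r)^(A-1)/(1-2*r))) = 1
     \<or> min 1 (min (1/(((1-r)/r)^A - 1)) (r*(1-r)^(A-1)/(1-2*r))) = 1/(q^A - 1)
     \<or> min 1 (min (1/(((1-r)/r)^A - 1)) (r*(1-r)^(A-1)/(1-2*r))) = r*(1-r)^(A-1)/(1-2*r)"
    unfolding q_def p_def by (simp add: min_def)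
  thus ?thesis using t1 t2 t3 by auto
qed

theorem mainTheorem4:
  fixes \<alpha> :: real and s k :: nat and a :: "nat \<Rightarrow> nat"
  assumes "\<alpha> > 1" and "s \<ge> 2"
    and "k > 0" and "even k"
    and "\<forall>i\<in>{1..k}. a i > 0"
    and "\<forall>i\<in>{1..k div 2}. a (2*i - 1) + a (2*i) = s"
    and "let r = cratio \<alpha>; A = abar s; B = bbar s; N = nat (nstar \<alpha> s) in
         real k \<ge> Max {
           real_of_int \<lceil>2 * ((1 - r + r ^ N) ^ (A - 1) * (B * (1 - r + r ^ N) + A))
              / ((1 - r) ^ (A - 1) * (1 - r ^ N) ^ (B - 1) * (B * (1 - r) + A * (1 - r ^ N))) + 2\<rceil>
             * ((1 - r) / r) ^ A,
           2 * ((1 - r) / r) ^ (A + 1),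
           2 * (1 / (1 - r)) ^ (s - 1) + 2}"
  shows "{0 .. real k / 2} =
    {\<Sum>i\<in>{1..k div 2}. x (2*i - 1) ^ a (2*i - 1) * x (2*i) ^ a (2*i) | x :: nat \<Rightarrow> real.
       \<forall>j\<in>{1..k}. x j \<in> cantor \<alpha>}"
proof -
  let ?r = "cratio \<alpha>"
  define A where "A = abar s"
  define m where "m = k div 2"
  have r: "0 < ?r" "?r < 1/2" using r_pos[OF assms(1)] r_half[OF assms(1)] by auto
  have hk: "2 * ((1 - ?r)/?r)^(abar s + 1) \<le> real k" "2 * (1/(1 - ?r))^(s-1) + 2 \<le> real k"
    using max3[OF assms(7)[unfolded Let_def]] by auto
  have km: "k = 2 * m" unfolding m_def using assms(4) by simp
  have A_eq: "A = s div 2" unfolding A_def abar_def by (cases "odd s") (auto elim: oddE)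
  have A1: "1 \<le> A" using A_eq assms(2) by simp
  have A2: "2*A \<le> s" using A_eq by simp
  have h2: "((1-?r)/?r)^(A+1) \<le> real m" using hk(1) km unfolding A_def by simp
  have h3: "(1/(1-?r))^(s-1) + 1 \<le> real m" using hk(2) km by simp
  define q where "q = (1 - ?r)/?r"
  have q1: "1 < q" unfolding q_def using r by (simp add: field_simps)
  define \<tau> where "\<tau> = min 1 (min (1/(q^A - 1)) (?r*(1-?r)^(A-1)/(1-2*?r)))"
  have cond: "(real m - 1) * \<tau> > 1"
    using numeric[OF r A1 A2 h2 h3] unfolding \<tau>_def q_def by simp
  have qA: "1 < q^A" using q1 A1 by (intro one_less_power) auto
  have tpos: "0 < \<tau>"
  proof -
    have "0 < 1/(q^A - 1)" using qA by simp
    moreover have "0 < ?r*(1-?r)^(A-1)/(1-2*?r)" using r by simp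
    ultimately show ?thesis unfolding \<tau>_def by simp
  qed
  have tle1: "\<tau> \<le> 1" unfolding \<tau>_def by simp
  have tle2: "\<tau> \<le> 1/(q^A - 1)" unfolding \<tau>_def by simp
  have tle3: "\<tau> \<le> ?r*(1-?r)^(A-1)/(1-2*?r)" unfolding \<tau>_def by simp
  define c where "c i = min (a (2*i - 1)) (a (2*i))" for i
  have cprop: "1 \<le> c i \<and> c i \<le> A" if i: "i \<in> {1..m}" for i
  proof -
    have "2*i - 1 \<in> {1..k}" "2*i \<in> {1..k}" using i km by auto
    hence "a (2*i - 1) > 0" "a (2*i) > 0" using assms(5) by auto
    moreover have "a (2*i - 1) + a (2*i) = s" using assms(6) i km by auto
    ultimately show ?thesis unfolding c_def A_eq by auto
  qed
  define K where "K i = (\<lambda>x. x^(c i)) ` cantor \<alpha>" for i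
  have Kp: "\<forall>i\<in>{1..m}. closed (K i) \<and> K i \<subseteq> {0..1} \<and> 0 \<in> K i \<and> 1 \<in> K i \<and> thick (K i) \<tau>"
  proof
    fix i assume i: "i \<in> {1..m}"
    have c1: "1 \<le> c i" and cA: "c i \<le> A" using cprop[OF i] by auto
    have "compact (K i)" unfolding K_def
      by (intro compact_continuous_image compact_cantor[OF assms(1)] continuous_intros)
    hence "closed (K i)" by (rule compact_imp_closed)
    moreover have "K i \<subseteq> {0..1}"
    proof
      fix y assume "y \<in> K i"
      then obtain v where v: "v \<in> cantor \<alpha>" "y = v^(c i)" unfolding K_def by blast
      have "0 \<le> v" "v \<le> 1" using cantor_01[OF assms(1) v(1)] by auto
      thus "y \<in> {0..1}" using v(2) power_le_one by simp
    qed
    moreover have "0 \<in> K i" unfolding K_def using zero_cantor[OF assms(1)] c1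
      by (metis image_eqI not_one_le_zero power_0_left)
    moreover have "1 \<in> K i" unfolding K_def using one_cantor[OF assms(1)]
      by (metis image_eqI power_one)
    moreover have "thick (K i) \<tau>" unfolding K_def
    proof (rule thick_pow[OF assms(1) c1 tpos])
      have "q^(c i) \<le> q^A" using q1 cA by (intro power_increasing) auto
      moreover have "1 \<le> q^(c i)" using q1 by (intro one_le_power) auto
      ultimately have "\<tau> * (q^(c i) - 1) \<le> (1/(q^A - 1)) * (q^A - 1)"
        using tle2 tpos by (intro mult_mono) auto
      also have "\<dots> = 1" using qA by simp
      finally show "\<tau> * (((1 - ?r)/?r)^(c i) - 1) \<le> 1" unfolding q_def .
    next
      have "\<tau> * (1 - 2*?r) \<le> (?r*(1-?r)^(A-1)/(1-2*?r)) * (1 - 2*?r)"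
        using tle3 r by (intro mult_right_mono) auto
      also have "\<dots> = ?r*(1-?r)^(A-1)" using r by simp
      also have "\<dots> \<le> ?r*(1-?r)^(c i - 1)"
        using r cA by (intro mult_left_mono power_decreasing) auto
      finally show "\<tau> * (1 - 2 * ?r) \<le> ?r * (1 - ?r)^(c i - 1)" .
    qed
    ultimately show "closed (K i) \<and> K i \<subseteq> {0..1} \<and> 0 \<in> K i \<and> 1 \<in> K i \<and> thick (K i) \<tau>" by blast
  qed
  have cardI: "card {1..m} = m" by simp
  have ind: "odd (2*i - 1)" "\<not> odd (2*i)" "(2*i - 1 + 1) div 2 = i" "2*i - 1 + 1 = 2*i" "(2*i) div 2 = i"
    if "1 \<le> i" for i :: nat
    using that by presburger+
  show ?thesis
  proof (intro set_eqI iffI)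
    fix t assume t: "t \<in> {0 .. real k / 2}"
    hence t': "0 \<le> t" "t \<le> real m" using km by auto
    obtain z where z: "\<forall>i\<in>{1..m}. z i \<in> K i" "sum z {1..m} = t"
      using cover[OF _ cardI Kp tpos tle1 cond t'] by auto
    have "\<forall>i\<in>{1..m}. \<exists>v. v \<in> cantor \<alpha> \<and> z i = v^(c i)" using z(1) unfolding K_def by blast
    from bchoice[OF this] obtain w where w: "\<forall>i\<in>{1..m}. w i \<in> cantor \<alpha> \<and> z i = (w i)^(c i)" by blast
    define x where "x j = (if odd j then (if a j \<le> a (j+1) then w ((j+1) div 2) else 1)
                           else (if a (j-1) \<le> a j then 1 else w (j div 2)))" for j
    have xC: "\<forall>j\<in>{1..k}. x j \<in> cantor \<alpha>"
    proof
      fix j assume j: "j \<in> {1..k}"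
      show "x j \<in> cantor \<alpha>"
      proof (cases "odd j")
        case True
        then obtain l where l: "j = 2*l + 1" by (rule oddE)
        have "(j+1) div 2 = l + 1" using l by simp
        moreover have "l + 1 \<in> {1..m}" using j l km by simp
        ultimately have "w ((j+1) div 2) \<in> cantor \<alpha>" using w by auto
        thus ?thesis unfolding x_def using True one_cantor[OF assms(1)] by simp
      next
        case False
        then obtain l where l: "j = 2*l" by (auto elim: evenE)
        have "j div 2 = l" using l by simp
        moreover have "l \<in> {1..m}" using j l km by simp
        ultimately have "w (j div 2) \<in> cantor \<alpha>" using w by auto
        thus ?thesis unfolding x_def using False one_cantor[OF assms(1)] by simp
      qed
    qed
    have trm: "x (2*i - 1) ^ a (2*i - 1) * x (2*i) ^ a (2*i) = z i" if i: "i \<in> {1..m}" for i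
    proof -
      have i1: "1 \<le> i" using i by simp
      have wi: "z i = (w i)^(c i)" using w i by blast
      show ?thesis
      proof (cases "a (2*i - 1) \<le> a (2*i)")
        case True
        have "x (2*i - 1) = w i" "x (2*i) = 1" unfolding x_def using ind[OF i1] True by auto
        moreover have "c i = a (2*i - 1)" unfolding c_def using True by simp
        ultimately show ?thesis using wi by simp
      next
        case False
        have "x (2*i - 1) = 1" "x (2*i) = w i" unfolding x_def using ind[OF i1] False by auto
        moreover have "c i = a (2*i)" unfolding c_def using False by simp
        ultimately show ?thesis using wi by simp
      qed
    qed
    have "(\<Sum>i\<in>{1..m}. x (2*i - 1) ^ a (2*i - 1) * x (2*i) ^ a (2*i)) = (\<Sum>i\<in>{1..m}. z i)"
      by (rule sum.cong[OF refl], rule trm)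
    hence eqt: "t = (\<Sum>i\<in>{1..k div 2}. x (2*i - 1) ^ a (2*i - 1) * x (2*i) ^ a (2*i))"
      using z(2) unfolding m_def by simp
    show "t \<in> {\<Sum>i\<in>{1..k div 2}. x (2*i - 1) ^ a (2*i - 1) * x (2*i) ^ a (2*i) | x :: nat \<Rightarrow> real.
       \<forall>j\<in>{1..k}. x j \<in> cantor \<alpha>}"
      by (rule CollectI, rule exI[of _ x], rule conjI[OF eqt xC])
  next
    fix t assume "t \<in> {\<Sum>i\<in>{1..k div 2}. x (2*i - 1) ^ a (2*i - 1) * x (2*i) ^ a (2*i) | x :: nat \<Rightarrow> real.
       \<forall>j\<in>{1..k}. x j \<in> cantor \<alpha>}"
    then obtain x where x0: "t = (\<Sum>i\<in>{1..k div 2}. x (2*i - 1) ^ a (2*i - 1) * x (2*i) ^ a (2*i))"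
      "\<forall>j\<in>{1..k}. x j \<in> cantor \<alpha>" by (rule CollectE, elim exE conjE) 
    have x: "t = (\<Sum>i\<in>{1..m}. x (2*i - 1) ^ a (2*i - 1) * x (2*i) ^ a (2*i))"
      "\<forall>j\<in>{1..k}. x j \<in> cantor \<alpha>" using x0 unfolding m_def by auto
    have bnd: "0 \<le> x (2*i - 1) ^ a (2*i - 1) * x (2*i) ^ a (2*i) \<and> x (2*i - 1) ^ a (2*i - 1) * x (2*i) ^ a (2*i) \<le> 1"
      if i: "i \<in> {1..m}" for i
    proof -
      have "2*i - 1 \<in> {1..k}" "2*i \<in> {1..k}" using i km by auto
      hence u: "0 \<le> x (2*i - 1)" "x (2*i - 1) \<le> 1" "0 \<le> x (2*i)" "x (2*i) \<le> 1"
        using x(2) cantor_01[OF assms(1)] by auto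
      have p1: "x (2*i - 1) ^ a (2*i - 1) \<le> 1" using u(1,2) by (rule power_le_one)
      have p2: "x (2*i) ^ a (2*i) \<le> 1" using u(3,4) by (rule power_le_one)
      have p3: "0 \<le> x (2*i - 1) ^ a (2*i - 1)" using u(1) by simp
      have p4: "0 \<le> x (2*i) ^ a (2*i)" using u(3) by simp
      show ?thesis using mult_le_one[OF p1 p4 p2] mult_nonneg_nonneg[OF p3 p4] by simp
    qed
    have "0 \<le> t" unfolding x(1) using bnd by (intro sum_nonneg) blast
    moreover have "t \<le> (\<Sum>i\<in>{1..m}. (1::real))" unfolding x(1) using bnd by (intro sum_mono) blast
    ultimately show "t \<in> {0 .. real k / 2}" using km by simp
  qed
qed

end
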